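(* Let $P\subset\mathbb{R}^4$ be the set of $(e_1,\dots,e_4)$ with $e_1\le e_2\le e_3\le e_4$ and $e_{i+j}\le e_i+e_j$ for all $i,j\ge1$ with $i+j\le4$. Let $Q\subset\mathbb{R}^4\times\mathbb{R}^5$ be the set of $(e_1,\dots,e_4,f_1,\dots,f_5)$ such that $e_1\le\dots\le e_4$, $f_1\le\dots\le f_5$, $2\sum_{k=1}^4e_k=\sum_{i=1}^5f_i$, and, writing $N=\sum_k e_k$ and $d^{(k)}_{ij}=f_i+f_j+e_k-N$: (i) $d^{(k)}_{ij}\ge0$ for all $1\le i<j\le5$, $1\le k\le4$ with $i+j+k=8$; (ii) if $d^{(1)}_{15}<0$, $d^{(1)}_{24}<0$ and $d^{(4)}_{12}<0$ then $d^{(1)}_{25}=0$. Let $\mathrm{pr}\colon\mathbb{R}^4\times\mathbb{R}^5\to\mathbb{R}^4$ be the projection to the first four coordinates. Then $\mathrm{pr}(Q\cap\mathbb{Z}^9)=P\cap\mathbb{Z}^4$. *)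

theory Defs
  imports Complex_Main
begin

text \<open>Points of R^4 and R^5 are represented as real lists of length 4 and 5;
  ent xs i is the 1-indexed coordinate x_i.\<close>

definition ent :: "real list \<Rightarrow> nat \<Rightarrow> real" where
  "ent xs i = xs ! (i - 1)"

definition P4 :: "real list set" where
  "P4 = {e. length e = 4
          \<and> (\<forall>i. 1 \<le> i \<and> i < 4 \<longrightarrow> ent e i \<le> ent e (i + 1))
          \<and> (\<forall>i j. 1 \<le> i \<and> 1 \<le> j \<and> i + j \<le> 4 \<longrightarrow> ent e (i + j) \<le> ent e i + ent e j)}"

definition dd :: "real list \<Rightarrow> real list \<Rightarrow> nat \<Rightarrow> nat \<Rightarrow> nat \<Rightarrow> real" where
  "dd e f k i j = ent f i + ent f j + ent e k - sum_list e"

definition Q45 :: "(real list \<times> real list) set" where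
  "Q45 = {(e, f). length e = 4 \<and> length f = 5
          \<and> (\<forall>i. 1 \<le> i \<and> i < 4 \<longrightarrow> ent e i \<le> ent e (i + 1))
          \<and> (\<forall>i. 1 \<le> i \<and> i < 5 \<longrightarrow> ent f i \<le> ent f (i + 1))
          \<and> 2 * sum_list e = sum_list f
          \<and> (\<forall>i j k. 1 \<le> i \<and> i < j \<and> j \<le> 5 \<and> 1 \<le> k \<and> k \<le> 4 \<and> i + j + k = 8
                \<longrightarrow> dd e f k i j \<ge> 0)
          \<and> (dd e f 1 1 5 < 0 \<and> dd e f 1 2 4 < 0 \<and> dd e f 4 1 2 < 0
                \<longrightarrow> dd e f 1 2 5 = 0)}"

definition int_pt :: "real list \<Rightarrow> bool" where
  "int_pt xs \<longleftrightarrow> set xs \<subseteq> \<int>"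

end

theory Submission
  imports Defs
begin

lemma len4: "length xs = 4 \<Longrightarrow> \<exists>a b c d. xs = [a,b,c,d]"
  by (cases xs; cases "tl xs"; cases "tl (tl xs)"; cases "tl (tl (tl xs))"; auto)

lemma len5: "length xs = 5 \<Longrightarrow> \<exists>a b c d g. xs = [a,b,c,d,g]"
  by (cases xs; cases "tl xs"; cases "tl (tl xs)"; cases "tl (tl (tl xs))";
      cases "tl (tl (tl (tl xs)))"; auto)

lemma all3: "(\<forall>i::nat. 1 \<le> i \<and> i < 4 \<longrightarrow> P i) \<longleftrightarrow> P 1 \<and> P 2 \<and> P 3"
proof -
  have "1 \<le> i \<and> i < 4 \<longleftrightarrow> i = 1 \<or> i = 2 \<or> i = (3::nat)" for i by arith
  then show ?thesis by auto
qed

lemma all4: "(\<forall>i::nat. 1 \<le> i \<and> i < 5 \<longrightarrow> P i) \<longleftrightarrow> P 1 \<and> P 2 \<and> P 3 \<and> P 4"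
proof -
  have "1 \<le> i \<and> i < 5 \<longleftrightarrow> i = 1 \<or> i = 2 \<or> i = 3 \<or> i = (4::nat)" for i by arith
  then show ?thesis by auto
qed

lemma allpair: "(\<forall>i j::nat. 1 \<le> i \<and> 1 \<le> j \<and> i + j \<le> 4 \<longrightarrow> P i j) \<longleftrightarrow>
   P 1 1 \<and> P 1 2 \<and> P 2 1 \<and> P 1 3 \<and> P 3 1 \<and> P 2 2"
proof -
  have "1 \<le> i \<and> 1 \<le> j \<and> i + j \<le> 4 \<longleftrightarrow>
     (i,j) = (1,1) \<or> (i,j) = (1,2) \<or> (i,j) = (2,1) \<or> (i,j) = (1,3) \<or> (i,j) = (3,1) \<or> (i,j) = (2,(2::nat))"
    for i j :: nat by auto
  then show ?thesis by auto
qed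

lemma trip_cases:
  fixes i j k :: nat
  assumes A: "1 \<le> i \<and> i < j \<and> j \<le> 5 \<and> 1 \<le> k \<and> k \<le> 4 \<and> i + j + k = 8"
  shows "(i=2 \<and> j=5 \<and> k=1) \<or> (i=3 \<and> j=4 \<and> k=1) \<or> (i=1 \<and> j=5 \<and> k=2) \<or> (i=2 \<and> j=4 \<and> k=2)
     \<or> (i=1 \<and> j=4 \<and> k=3) \<or> (i=2 \<and> j=3 \<and> k=3) \<or> (i=1 \<and> j=3 \<and> k=4)"
proof -
  have j: "j = 2 \<or> j = 3 \<or> j = 4 \<or> j = 5" using A by linarith
  have i: "i = 1 \<or> i = 2 \<or> i = 3 \<or> i = 4" using A by linarith
  have k: "k = 8 - i - j" using A by linarith
  show ?thesis using i j A unfolding k by (elim disjE; simp)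
qed

lemma alltrip: "(\<forall>i j k::nat. 1 \<le> i \<and> i < j \<and> j \<le> 5 \<and> 1 \<le> k \<and> k \<le> 4 \<and> i + j + k = 8
                \<longrightarrow> P i j k) \<longleftrightarrow>
   P 2 5 1 \<and> P 3 4 1 \<and> P 1 5 2 \<and> P 2 4 2 \<and> P 1 4 3 \<and> P 2 3 3 \<and> P 1 3 4"
proof
  assume "\<forall>i j k::nat. 1 \<le> i \<and> i < j \<and> j \<le> 5 \<and> 1 \<le> k \<and> k \<le> 4 \<and> i + j + k = 8 \<longrightarrow> P i j k"
  then show "P 2 5 1 \<and> P 3 4 1 \<and> P 1 5 2 \<and> P 2 4 2 \<and> P 1 4 3 \<and> P 2 3 3 \<and> P 1 3 4"
    by simp
next
  assume B: "P 2 5 1 \<and> P 3 4 1 \<and> P 1 5 2 \<and> P 2 4 2 \<and> P 1 4 3 \<and> P 2 3 3 \<and> P 1 3 4"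
  show "\<forall>i j k::nat. 1 \<le> i \<and> i < j \<and> j \<le> 5 \<and> 1 \<le> k \<and> k \<le> 4 \<and> i + j + k = 8 \<longrightarrow> P i j k"
  proof (intro allI impI)
    fix i j k :: nat
    assume "1 \<le> i \<and> i < j \<and> j \<le> 5 \<and> 1 \<le> k \<and> k \<le> 4 \<and> i + j + k = 8"
    from trip_cases[OF this] show "P i j k" using B by (elim disjE; simp)
  qed
qed

lemma P4_iff: "[a,b,c,d] \<in> P4 \<longleftrightarrow> a \<le> b \<and> b \<le> c \<and> c \<le> d \<and> b \<le> 2*a \<and> c \<le> a + b \<and> d \<le> a + c \<and> d \<le> 2*b"
  unfolding P4_def all3 allpair by (auto simp: ent_def)

lemma Q45_iff: "([a,b,c,d], [f1,f2,f3,f4,f5]) \<in> Q45 \<longleftrightarrow>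
   (a \<le> b \<and> b \<le> c \<and> c \<le> d \<and> f1 \<le> f2 \<and> f2 \<le> f3 \<and> f3 \<le> f4 \<and> f4 \<le> f5 \<and>
   2*(a+b+c+d) = f1+f2+f3+f4+f5 \<and>
   0 \<le> f2+f5+a-(a+b+c+d) \<and> 0 \<le> f3+f4+a-(a+b+c+d) \<and> 0 \<le> f1+f5+b-(a+b+c+d) \<and>
   0 \<le> f2+f4+b-(a+b+c+d) \<and> 0 \<le> f1+f4+c-(a+b+c+d) \<and> 0 \<le> f2+f3+c-(a+b+c+d) \<and>
   0 \<le> f1+f3+d-(a+b+c+d) \<and>
   (f1+f5+a-(a+b+c+d) < 0 \<and> f2+f4+a-(a+b+c+d) < 0 \<and> f1+f2+d-(a+b+c+d) < 0 \<longrightarrow>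
     f2+f5+a-(a+b+c+d) = 0))"
proof -
  have e: "ent [a,b,c,d] 1 = a" "ent [a,b,c,d] 2 = b" "ent [a,b,c,d] 3 = c" "ent [a,b,c,d] 4 = d"
    "ent [f1,f2,f3,f4,f5] 1 = f1" "ent [f1,f2,f3,f4,f5] 2 = f2" "ent [f1,f2,f3,f4,f5] 3 = f3"
    "ent [f1,f2,f3,f4,f5] 4 = f4" "ent [f1,f2,f3,f4,f5] 5 = f5"
    by (simp_all add: ent_def)
  have s: "sum_list [a,b,c,d] = a+b+c+d" by simp
  have n: "(1::nat)+1 = 2" "(2::nat)+1 = 3" "(3::nat)+1 = 4" "(4::nat)+1 = 5" by simp_all
  show ?thesis
    unfolding Q45_def all3 all4 alltrip mem_Collect_eq case_prod_conv dd_def e s n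
    by (simp add: add.assoc)
qed

lemma min_Ints: "x \<in> \<int> \<Longrightarrow> y \<in> \<int> \<Longrightarrow> min x y \<in> \<int>" by (simp add: min_def)
lemma max_Ints: "x \<in> \<int> \<Longrightarrow> y \<in> \<int> \<Longrightarrow> max x y \<in> \<int>" by (simp add: max_def)

lemma sub_dir: assumes "(e, f) \<in> Q45" shows "e \<in> P4"
proof -
  from assms have "length e = 4 \<and> length f = 5"
    unfolding Q45_def mem_Collect_eq case_prod_conv by (elim conjE) (intro conjI)
  then have "length e = 4" "length f = 5" by simp_all
  then obtain a b c d f1 f2 f3 f4 f5 where ee: "e = [a,b,c,d]" and ff: "f = [f1,f2,f3,f4,f5]"
    using len4 len5 by metis
  from assms have H: "([a,b,c,d], [f1,f2,f3,f4,f5]) \<in> Q45" using ee ff by simp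
  show ?thesis using H unfolding ee P4_iff Q45_iff by argo
qed

lemma sup_dir: assumes "e \<in> P4" "int_pt e" shows "\<exists>f. (e, f) \<in> Q45 \<and> int_pt f"
proof -
  from assms(1) have "length e = 4" unfolding P4_def mem_Collect_eq by (rule conjunct1)
  then obtain a b c d where ee: "e = [a,b,c,d]" using len4 by metis
  from assms have H: "a \<le> b" "b \<le> c" "c \<le> d" "b \<le> 2*a" "c \<le> a + b" "d \<le> a + c" "d \<le> 2*b"
    using ee P4_iff by simp_all
  from assms(2) have I: "a \<in> \<int>" "b \<in> \<int>" "c \<in> \<int>" "d \<in> \<int>" unfolding ee int_pt_def by auto
  define s where "s = a+c-d"
  define u where "u = 2*a-b"
  define v where "v = 2*b-d"
  define q where "q = c-b"
  define t where "t = min s v"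
  define x4 where "x4 = max 0 (max (s-u) (s-q-t))"
  define x1 where "x1 = t - x4"
  define x2 where "x2 = max x1 (s-q-x4)"
  have t1: "t \<le> s" "t \<le> v" "t = s \<or> t = v" unfolding t_def by auto
  have x41: "x4 \<ge> 0" "x4 \<ge> s-u" "x4 \<ge> s-q-t" "x4 = 0 \<or> x4 = s-u \<or> x4 = s-q-t"
    unfolding x4_def by auto
  have x21: "x2 \<ge> x1" "x2 \<ge> s-q-x4" "x2 = x1 \<or> x2 = s-q-x4" unfolding x2_def by auto
  have Is: "s \<in> \<int>" "u \<in> \<int>" "v \<in> \<int>" "q \<in> \<int>" unfolding s_def u_def v_def q_def
    using I by (auto intro!: Ints_add Ints_diff Ints_mult)
  have It: "t \<in> \<int>" unfolding t_def using Is by (simp add: min_Ints)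
  have Ix4: "x4 \<in> \<int>" unfolding x4_def using Is It by (auto intro!: max_Ints Ints_diff)
  have Ix1: "x1 \<in> \<int>" unfolding x1_def using It Ix4 by auto
  have Ix2: "x2 \<in> \<int>" unfolding x2_def using Is Ix4 Ix1 by (auto intro!: max_Ints Ints_diff)
  let ?f = "[2*a-x1, a+b-x2, d+t, b+c-x4, c+d-a+x2]"
  have "([a,b,c,d], ?f) \<in> Q45"
    unfolding Q45_iff
    using H t1 x41 x21 x1_def s_def u_def v_def q_def by argo
  moreover have "int_pt ?f" unfolding int_pt_def using I It Ix1 Ix2 Ix4
    by (auto intro!: Ints_add Ints_diff Ints_mult)
  ultimately show ?thesis using ee by blast
qed

theorem lemma6p2:
  shows "fst ` (Q45 \<inter> {(e, f). int_pt e \<and> int_pt f}) = P4 \<inter> {e. int_pt e}"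
proof
  show "fst ` (Q45 \<inter> {(e, f). int_pt e \<and> int_pt f}) \<subseteq> P4 \<inter> {e. int_pt e}"
    using sub_dir by force
  show "P4 \<inter> {e. int_pt e} \<subseteq> fst ` (Q45 \<inter> {(e, f). int_pt e \<and> int_pt f})"
  proof
    fix e assume "e \<in> P4 \<inter> {e. int_pt e}"
    then obtain f where "(e, f) \<in> Q45" "int_pt f" "int_pt e" using sup_dir by blast
    then show "e \<in> fst ` (Q45 \<inter> {(e, f). int_pt e \<and> int_pt f})" by force
  qed
qed

end
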